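(* Let $1\le t\le n$ and write $n=at+b$ with $a\ge1$ and $0\le b<t$. Then for all $s\ge1$, $$\mathrm{mult}\bigl(S/I_t(L_n)^s\bigr)=\binom{s+a-1}{s-1}\binom{a+t-b-1}{a}.$$ In particular, $\mathrm{mult}(S/I_t(L_n)^s)$ is a polynomial in $s$ of degree $a$ for all $s\ge1$.
   Context: $K$ is a field, $S=K[x_1,\ldots,x_n]$ standard graded, $I_t(L_n)=(u_1,\ldots,u_{n-t+1})$ with $u_i=x_ix_{i+1}\cdots x_{i+t-1}$ (the $t$-path ideal of the line graph $L_n$ with edges $\{x_j,x_{j+1}\}$). For a finitely generated graded $S$-module $M$ of Krull dimension $d$, its Hilbert series is $\sum_i\dim_K M_i z^i=Q(M,z)/(1-z)^d$ with $Q(M,z)$ a Laurent polynomial and $Q(M,1)\neq0$; the multiplicity is $\mathrm{mult}(M)=e_0(M)=Q(M,1)$. *)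

theory Defs
  imports "HOL-Computational_Algebra.Polynomial_FPS"
begin

(* Monomials of S = K[x_1,...,x_n] are represented by exponent vectors
   alpha :: nat => nat supported on {1..n}. *)

definition monomial_exps :: "nat \<Rightarrow> (nat \<Rightarrow> nat) set" where
  "monomial_exps n = {\<alpha>. \<forall>j. j \<notin> {1..n} \<longrightarrow> \<alpha> j = 0}"

definition mdeg :: "nat \<Rightarrow> (nat \<Rightarrow> nat) \<Rightarrow> nat" where
  "mdeg n \<alpha> = (\<Sum>j=1..n. \<alpha> j)"

(* exponent vector of the generator u_i = x_i x_{i+1} ... x_{i+t-1} *)
definition path_gen :: "nat \<Rightarrow> nat \<Rightarrow> nat \<Rightarrow> nat" where
  "path_gen t i = (\<lambda>j. if i \<le> j \<and> j < i + t then 1 else 0)"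

(* x^alpha lies in the monomial ideal I_t(L_n)^s iff it is divisible by a product of
   s generators u_i (i = 1..n-t+1), taken with multiplicities c i *)
definition in_path_power :: "nat \<Rightarrow> nat \<Rightarrow> nat \<Rightarrow> (nat \<Rightarrow> nat) \<Rightarrow> bool" where
  "in_path_power n t s \<alpha> \<longleftrightarrow>
     (\<exists>c :: nat \<Rightarrow> nat. (\<Sum>i=1..n-t+1. c i) = s \<and>
        (\<forall>j. (\<Sum>i=1..n-t+1. c i * path_gen t i j) \<le> \<alpha> j))"

(* Hilbert function of S / I_t(L_n)^s: the monomials not in a monomial ideal form a
   K-basis of the quotient, so dim_K (S/I^s)_k is the number of degree-k monomials
   outside I^s. *)
definition path_hilb :: "nat \<Rightarrow> nat \<Rightarrow> nat \<Rightarrow> nat \<Rightarrow> nat" where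
  "path_hilb n t s k = card {\<alpha> \<in> monomial_exps n. mdeg n \<alpha> = k \<and> \<not> in_path_power n t s \<alpha>}"

definition hilbert_mult :: "(nat \<Rightarrow> nat) \<Rightarrow> int" where
  "hilbert_mult h = (THE e. \<exists>(d::nat) (Q::int poly).
      fps_of_poly Q = Abs_fps (\<lambda>k. int (h k)) * (1 - fps_X) ^ d \<and>
      poly Q 1 \<noteq> 0 \<and> e = poly Q 1)"

end

theory Submission
  imports Defs
begin

unbundle fps_syntax



definition Vs :: "nat set \<Rightarrow> (nat \<Rightarrow> nat) set" where
  "Vs X = {\<alpha>. \<forall>j. j \<notin> X \<longrightarrow> \<alpha> j = 0}"

definition cnt :: "((nat \<Rightarrow> nat) \<Rightarrow> bool) \<Rightarrow> nat set \<Rightarrow> nat \<Rightarrow> nat" where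
  "cnt P X k = card {\<alpha> \<in> Vs X. P \<alpha> \<and> sum \<alpha> X = k}"

definition GF :: "((nat \<Rightarrow> nat) \<Rightarrow> bool) \<Rightarrow> nat set \<Rightarrow> int fps" where
  "GF P X = Abs_fps (\<lambda>k. int (cnt P X k))"

lemma fin_deg:
  assumes "finite X"
  shows "finite {\<alpha> \<in> Vs X. Q \<alpha> \<and> sum \<alpha> X = k}"
proof -
  have "{\<alpha> \<in> Vs X. Q \<alpha> \<and> sum \<alpha> X = k} \<subseteq> {f. \<forall>x. (x \<in> X \<longrightarrow> f x \<in> {0..k}) \<and> (x \<notin> X \<longrightarrow> f x = 0)}"
    using assms by (auto simp: Vs_def intro: member_le_sum)
  moreover have "finite {f. \<forall>x. (x \<in> X \<longrightarrow> f x \<in> {0..k}) \<and> (x \<notin> X \<longrightarrow> f x = (0::nat))}"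
    by (rule finite_set_of_finite_funs) (use assms in auto)
  ultimately show ?thesis by (rule finite_subset)
qed

lemma sum_upd:
  assumes "finite X" "v \<in> X"
  shows "sum (\<alpha>(v:=m)) X = m + sum \<alpha> (X - {v})"
proof -
  have "sum (\<alpha>(v:=m)) X = (\<alpha>(v:=m)) v + sum (\<alpha>(v:=m)) (X - {v})"
    using assms by (simp add: sum.remove)
  also have "sum (\<alpha>(v:=m)) (X - {v}) = sum \<alpha> (X - {v})"
    by (rule sum.cong) auto
  finally show ?thesis by simp
qed

lemma sum_split_v:
  assumes "finite X" "v \<in> X"
  shows "sum \<alpha> X = \<alpha> v + sum \<alpha> (X - {v})"
  using assms by (simp add: sum.remove)

lemma cnt_rec0:
  assumes "finite X" "v \<in> X"
  shows "cnt P X 0 = cnt P (X - {v}) 0"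
proof -
  have "{\<alpha> \<in> Vs X. P \<alpha> \<and> sum \<alpha> X = 0} = {\<alpha> \<in> Vs (X-{v}). P \<alpha> \<and> sum \<alpha> (X-{v}) = 0}"
    using assms by (auto simp: Vs_def sum_split_v)
  then show ?thesis by (simp add: cnt_def)
qed

lemma cnt_rec:
  assumes "finite X" "v \<in> X" and inv: "\<And>\<alpha> m. P (\<alpha>(v:=m)) = P \<alpha>"
  shows "cnt P X (Suc k) = cnt P (X - {v}) (Suc k) + cnt P X k"
proof -
  let ?S = "{\<alpha> \<in> Vs X. P \<alpha> \<and> sum \<alpha> X = Suc k}"
  let ?Z = "{\<alpha> \<in> Vs (X-{v}). P \<alpha> \<and> sum \<alpha> (X-{v}) = Suc k}"
  let ?T = "{\<alpha> \<in> Vs X. P \<alpha> \<and> sum \<alpha> X = k}"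
  let ?f = "\<lambda>\<alpha>. \<alpha>(v := Suc (\<alpha> v))"
  have Seq: "?S = ?Z \<union> ?f ` ?T"
  proof (intro equalityI subsetI)
    fix \<alpha> assume a: "\<alpha> \<in> ?S"
    show "\<alpha> \<in> ?Z \<union> ?f ` ?T"
    proof (cases "\<alpha> v = 0")
      case True
      then have "\<alpha> \<in> ?Z" using a assms by (auto simp: Vs_def sum_split_v)
      then show ?thesis by blast
    next
      case False
      let ?b = "\<alpha>(v := \<alpha> v - 1)"
      have e1: "sum ?b X = (\<alpha> v - 1) + sum \<alpha> (X - {v})" by (rule sum_upd[OF assms(1,2)])
      have e2: "sum \<alpha> X = \<alpha> v + sum \<alpha> (X - {v})" by (rule sum_split_v[OF assms(1,2)])
      have "sum ?b X = k" using e1 e2 a False by simp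
      moreover have "P ?b" using inv[of \<alpha> "\<alpha> v - 1"] a by simp
      moreover have "?b \<in> Vs X" using a assms by (auto simp: Vs_def)
      ultimately have "?b \<in> ?T" by blast
      moreover have "?f ?b = \<alpha>" using False by auto
      ultimately show ?thesis by (metis (no_types, lifting) UnI2 image_eqI)
    qed
  next
    fix \<alpha> assume a: "\<alpha> \<in> ?Z \<union> ?f ` ?T"
    then show "\<alpha> \<in> ?S"
    proof (rule UnE)
      assume b: "\<alpha> \<in> ?Z"
      then have "\<alpha> v = 0" by (auto simp: Vs_def)
      with b assms show ?thesis by (auto simp: Vs_def sum_split_v)
    next
      assume "\<alpha> \<in> ?f ` ?T"
      then obtain \<beta> where b: "\<beta> \<in> ?T" "\<alpha> = ?f \<beta>" by blast
      have "sum (?f \<beta>) X = Suc (\<beta> v) + sum \<beta> (X - {v})" by (rule sum_upd[OF assms(1,2)])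
      moreover have "sum \<beta> X = \<beta> v + sum \<beta> (X - {v})" by (rule sum_split_v[OF assms(1,2)])
      ultimately have s1: "sum (?f \<beta>) X = Suc k" using b(1) by simp
      have p1: "P (?f \<beta>)" using inv[of \<beta> "Suc (\<beta> v)"] b by simp
      have v1: "?f \<beta> \<in> Vs X" using b assms by (auto simp: Vs_def)
      show ?thesis unfolding b(2) using s1 p1 v1 by blast
    qed
  qed
  have d: "?Z \<inter> ?f ` ?T = {}" by (auto simp: Vs_def)
  have i: "inj_on ?f ?T"
    by (rule inj_onI) (metis fun_upd_idem_iff fun_upd_upd nat.inject fun_upd_same)
  have f0: "finite ?Z" using assms by (intro fin_deg) auto
  have f1: "finite ?T" using assms by (intro fin_deg) auto
  have "card ?S = card ?Z + card (?f ` ?T)"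
    unfolding Seq by (rule card_Un_disjoint[OF f0 finite_imageI[OF f1] d])
  also have "card (?f ` ?T) = card ?T" by (rule card_image[OF i])
  finally have "card ?S = card ?Z + card ?T" .
  then show ?thesis by (simp add: cnt_def)
qed

lemma fps_times_one_minus_X_nth:
  "((f :: int fps) * (1 - fps_X)) $ n = f $ n - (if n = 0 then 0 else f $ (n - 1))"
proof -
  have "f * (1 - fps_X) = f - fps_X * f" by (simp add: algebra_simps)
  then show ?thesis by (cases n) auto
qed

lemma GF_rec:
  assumes "finite X" "v \<in> X" and inv: "\<And>\<alpha> m. P (\<alpha>(v:=m)) = P \<alpha>"
  shows "GF P X * (1 - fps_X) = GF P (X - {v})"
proof (rule fps_ext)
  fix n show "(GF P X * (1 - fps_X)) $ n = GF P (X - {v}) $ n"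
    unfolding fps_times_one_minus_X_nth
    by (cases n) (auto simp: GF_def cnt_rec0[OF assms(1,2)] cnt_rec[OF assms])
qed

lemma GF_elim:
  assumes "finite D" "finite U" "D \<inter> U = {}"
    and dep: "\<And>\<alpha> \<beta>. (\<forall>j\<in>U. \<alpha> j = \<beta> j) \<Longrightarrow> P \<alpha> = P \<beta>"
  shows "GF P (U \<union> D) * (1 - fps_X) ^ card D = GF P U"
  using assms(1,3)
proof (induction D rule: finite_induct)
  case empty then show ?case by simp
next
  case (insert v D)
  have inv: "P (\<alpha>(v:=m)) = P \<alpha>" for \<alpha> m
    using insert.prems by (intro dep) auto
  have fin: "finite (U \<union> insert v D)" using insert assms by auto
  have "GF P (U \<union> insert v D) * (1 - fps_X) = GF P (U \<union> insert v D - {v})"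
    by (rule GF_rec[OF fin _ inv]) auto
  also have "U \<union> insert v D - {v} = U \<union> D" using insert by auto
  finally have e: "GF P (U \<union> insert v D) * (1 - fps_X) = GF P (U \<union> D)" .
  have "GF P (U \<union> insert v D) * (1 - fps_X) ^ card (insert v D)
      = (GF P (U \<union> insert v D) * (1 - fps_X)) * (1 - fps_X) ^ card D"
    using insert by (simp add: mult.assoc)
  also have "\<dots> = GF P U" using e insert by simp
  finally show ?case .
qed

lemma cnt_true:
  assumes "finite X"
  shows "cnt (\<lambda>_. True) X k = (if card X = 0 then (if k = 0 then 1 else 0) else (k + card X - 1) choose k)"
  using assms
proof (induction X arbitrary: k rule: finite_induct)
  case empty
  have "{\<alpha> \<in> Vs {}. sum \<alpha> {} = k} = (if k = 0 then {\<lambda>_. 0} else {})"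
    by (auto simp: Vs_def)
  then show ?case by (simp add: cnt_def)
next
  case (insert v X)
  have fin: "finite (insert v X)" using insert by simp
  have rem: "insert v X - {v} = X" using insert by auto
  show ?case
  proof (induction k)
    case 0
    show ?case using cnt_rec0[OF fin, of v "\<lambda>_. True"] insert.IH[of 0] rem insert by auto
  next
    case (Suc k)
    have "cnt (\<lambda>_. True) (insert v X) (Suc k) = cnt (\<lambda>_. True) X (Suc k) + cnt (\<lambda>_. True) (insert v X) k"
      using cnt_rec[OF fin, of v "\<lambda>_. True" k] rem by simp
    then show ?case using Suc insert.IH[of "Suc k"] insert
      by (cases "card X = 0") (auto simp: add.commute)
  qed
qed




definition cov :: "nat \<Rightarrow> nat \<Rightarrow> nat set \<Rightarrow> bool" where
  "cov t m C \<longleftrightarrow> C \<subseteq> {1..m} \<and> (\<forall>i. 1 \<le> i \<and> i + t \<le> m + 1 \<longrightarrow> (\<exists>j\<in>C. i \<le> j \<and> j < i + t))"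

lemma cov_finite: "cov t m C \<Longrightarrow> finite C"
  unfolding cov_def using finite_subset by blast

lemma cov_mem: "cov t m C \<Longrightarrow> x \<in> C \<Longrightarrow> 1 \<le> x \<and> x \<le> m"
  unfolding cov_def by auto

lemma div_pos1: "1 \<le> (t::nat) \<Longrightarrow> t \<le> m \<Longrightarrow> 1 \<le> m div t"
  using div_le_mono[of t m t] by simp

lemma cov_max:
  assumes c: "cov t m C" and "1 \<le> t" "t \<le> m"
  shows "C \<noteq> {} \<and> m + 1 \<le> Max C + t \<and> Max C \<le> m \<and> cov t (Max C - 1) (C - {Max C})"
proof -
  have fin: "finite C" using cov_finite[OF c] .
  have all: "\<And>i. 1 \<le> i \<Longrightarrow> i + t \<le> m + 1 \<Longrightarrow> \<exists>j\<in>C. i \<le> j \<and> j < i + t"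
    using c by (auto simp: cov_def)
  have w: "1 \<le> m + 1 - t" "m + 1 - t + t \<le> m + 1" using assms by auto
  obtain j where j: "j \<in> C" "m + 1 - t \<le> j" "j < m + 1 - t + t"
    using all[OF w] by blast
  have ne: "C \<noteq> {}" using j by auto
  have "j \<le> Max C" using j fin by simp
  then have g: "m + 1 \<le> Max C + t" using j assms by linarith
  have mx: "Max C \<in> C" using fin ne by simp
  then have le: "Max C \<le> m" using c by (auto simp: cov_def)
  have "cov t (Max C - 1) (C - {Max C})"
    unfolding cov_def
  proof (intro conjI allI impI)
    show "C - {Max C} \<subseteq> {1..Max C - 1}"
    proof
      fix x assume x: "x \<in> C - {Max C}"
      then have "x \<le> Max C" "x \<noteq> Max C" "1 \<le> x" using fin c by (auto simp: cov_def)
      then show "x \<in> {1..Max C - 1}" by auto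
    qed
  next
    fix i assume i: "1 \<le> i \<and> i + t \<le> Max C - 1 + 1"
    then have "i + t \<le> m + 1" using le mx c by (auto simp: cov_def)
    then obtain x where x: "x \<in> C" "i \<le> x" "x < i + t" using c i unfolding cov_def by blast
    have "Max C \<ge> 1" using mx c by (auto simp: cov_def)
    then have "x \<noteq> Max C" using x i by linarith
    then show "\<exists>j\<in>C - {Max C}. i \<le> j \<and> j < i + t" using x by blast
  qed
  then show ?thesis using ne g le by blast
qed

lemma cov_lower: "1 \<le> t \<Longrightarrow> cov t m C \<Longrightarrow> m div t \<le> card C"
proof (induction m arbitrary: C rule: less_induct)
  case (less m)
  show ?case
  proof (cases "m < t")
    case True then show ?thesis by simp
  next
    case False
    then have tm: "t \<le> m" by simp
    let ?c = "Max C"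
    have M: "C \<noteq> {} \<and> m + 1 \<le> ?c + t \<and> ?c \<le> m \<and> cov t (?c - 1) (C - {?c})"
      using cov_max[OF less.prems(2) less.prems(1) tm] .
    have fin: "finite C" using cov_finite[OF less.prems(2)] .
    have "?c \<ge> 1" using M fin cov_mem[OF less.prems(2) Max_in[OF fin]] by auto
    then have "?c - 1 < m" using M by linarith
    then have ih: "(?c - 1) div t \<le> card (C - {?c})" using less.IH M less.prems(1) by blast
    have cc: "card C = card (C - {?c}) + 1" using card.remove[OF fin Max_in[OF fin]] M by simp
    have "m - t \<le> ?c - 1" using M by linarith
    then have "(m - t) div t \<le> (?c - 1) div t" by (rule div_le_mono)
    moreover have "(m - t) div t = m div t - 1" using tm less.prems(1)
      by (simp add: le_div_geq)
    ultimately show ?thesis using ih cc by linarith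
  qed
qed

definition MC :: "nat \<Rightarrow> nat \<Rightarrow> nat set set" where
  "MC t m = {C. cov t m C \<and> card C = m div t}"

lemma MC_small:
  assumes "m < t"
  shows "MC t m = {{}}"
proof -
  have "cov t m {}" using assms by (auto simp: cov_def)
  moreover have "C = {}" if "cov t m C" "card C = 0" for C
    using that cov_finite by auto
  ultimately show ?thesis using assms by (auto simp: MC_def)
qed

lemma divmod_eq: "r < (t::nat) \<Longrightarrow> (q * t + r) div t = q \<and> (q * t + r) mod t = r"
  by simp

lemma MC_decomp:
  assumes "1 \<le> t" "t \<le> m"
  shows "MC t m = (\<Union>c\<in>{m+1-t..(m div t)*t}. insert c ` MC t (c - 1))"
proof -
  define a where "a = m div t"
  define b where "b = m mod t"
  have mab: "m = a * t + b" "b < t" "1 \<le> a" using assms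
    using div_pos1[of t m] by (auto simp: a_def b_def)
  show ?thesis
  proof (intro equalityI subsetI)
    fix C assume C: "C \<in> MC t m"
    then have cv: "cov t m C" and cd: "card C = a" by (auto simp: MC_def a_def)
    let ?c = "Max C"
    have M: "C \<noteq> {} \<and> m + 1 \<le> ?c + t \<and> ?c \<le> m \<and> cov t (?c - 1) (C - {?c})"
      using cov_max[OF cv assms] .
    have fin: "finite C" using cov_finite[OF cv] .
    have c1: "?c \<ge> 1" using M fin cov_mem[OF cv Max_in[OF fin]] by auto
    have cc: "card C = card (C - {?c}) + 1" using card.remove[OF fin Max_in[OF fin]] M by simp
    have lw: "(?c - 1) div t \<le> a - 1" using cov_lower[OF assms(1) conjunct2[OF conjunct2[OF conjunct2[OF M]]]] cc cd by linarith
    have "?c - 1 < a * t"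
    proof (rule ccontr)
      assume "\<not> ?c - 1 < a * t"
      then have "a * t \<le> ?c - 1" by simp
      then have "(a * t) div t \<le> (?c - 1) div t" by (rule div_le_mono)
      then show False using lw assms mab by simp
    qed
    then have cub: "?c \<le> a * t" by linarith
    have "(a - 1) * t \<le> ?c - 1" using M mab
      by (simp add: diff_mult_distrib, linarith)
    then have "((a - 1) * t) div t \<le> (?c - 1) div t" by (rule div_le_mono)
    then have "(?c - 1) div t = a - 1" using lw assms by simp
    then have "C - {?c} \<in> MC t (?c - 1)" using M cc cd by (auto simp: MC_def)
    moreover have "C = insert ?c (C - {?c})" using Max_in[OF fin] M by (simp add: insert_absorb)
    moreover have "?c \<in> {m+1-t..(m div t)*t}" using M cub a_def by auto
    ultimately show "C \<in> (\<Union>c\<in>{m+1-t..(m div t)*t}. insert c ` MC t (c - 1))" by blast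
  next
    fix C assume "C \<in> (\<Union>c\<in>{m+1-t..(m div t)*t}. insert c ` MC t (c - 1))"
    then obtain c C' where c: "c \<in> {m+1-t..a*t}" "C' \<in> MC t (c - 1)" "C = insert c C'"
      by (auto simp: a_def)
    have c1: "c \<ge> 1" using c(1) assms by auto
    have cm: "c \<le> m" using c(1) mab by auto
    have cv': "cov t (c-1) C'" and cd': "card C' = (c-1) div t" using c(2) by (auto simp: MC_def)
    have "c - 1 = (a - 1) * t + (c - 1 - (a-1)*t)" "c - 1 - (a-1)*t < t"
      using c(1) mab assms by (auto simp: diff_mult_distrib)
    then have dv: "(c - 1) div t = a - 1" by (metis divmod_eq)
    have nin: "c \<notin> C'" using cv' c1 by (auto simp: cov_def)
    have "card C = a" using c(3) nin cov_finite[OF cv'] cd' dv mab by simp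
    moreover have "cov t m C"
      unfolding cov_def
    proof (intro conjI allI impI)
      show "C \<subseteq> {1..m}"
      proof
        fix x assume "x \<in> C"
        then have "x = c \<or> x \<in> C'" using c(3) by auto
        then show "x \<in> {1..m}" using cov_mem[OF cv', of x] c1 cm by auto
      qed
    next
      fix i assume i: "1 \<le> i \<and> i + t \<le> m + 1"
      show "\<exists>j\<in>C. i \<le> j \<and> j < i + t"
      proof (cases "i + t \<le> c")
        case True
        then have "i + t \<le> c - 1 + 1" by simp
        then obtain j where "j \<in> C'" "i \<le> j" "j < i + t" using cv' i unfolding cov_def by blast
        then show ?thesis using c(3) by blast
      next
        case False
        then have "i \<le> c" using i c(1) by auto
        then show ?thesis using False c(3) by auto
      qed
    qed
    ultimately show "C \<in> MC t m" by (simp add: MC_def a_def)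
  qed
qed

lemma MC_card:
  assumes "1 \<le> t"
  shows "card (MC t m) = (m div t + t - m mod t - 1) choose (m div t)"
proof (induction m rule: less_induct)
  case (less m)
  show ?case
  proof (cases "m < t")
    case True then show ?thesis by (simp add: MC_small)
  next
    case False
    then have tm: "t \<le> m" by simp
    define a where "a = m div t"
    define b where "b = m mod t"
    have mab: "m = a * t + b" "b < t" "1 \<le> a" using assms tm
      using div_pos1[of t m] by (auto simp: a_def b_def)
    have fin: "finite (MC t k)" for k
    proof -
      have "MC t k \<subseteq> Pow {1..k}" by (auto simp: MC_def cov_def)
      then show ?thesis by (rule finite_subset) simp
    qed
    have inj: "inj_on (insert c) (MC t (c - 1))" if "c \<ge> 1" for c
    proof (rule inj_onI)
      fix X Y assume "X \<in> MC t (c - 1)" "Y \<in> MC t (c - 1)" "insert c X = insert c Y"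
      moreover have "c \<notin> X" "c \<notin> Y" using calculation that by (auto simp: MC_def cov_def)
      ultimately show "X = Y" by (metis insert_ident)
    qed
    have disj: "insert c ` MC t (c - 1) \<inter> insert c' ` MC t (c' - 1) = {}"
      if "c \<ge> 1" "c' \<ge> 1" "c \<noteq> c'" for c c'
    proof -
      have "False" if "X \<in> MC t (c - 1)" "Y \<in> MC t (c' - 1)" "insert c X = insert c' Y" for X Y
      proof -
        have X: "X \<subseteq> {1..c-1}" and Y: "Y \<subseteq> {1..c'-1}" using that by (auto simp: MC_def cov_def)
        have "c \<in> insert c' Y" "c' \<in> insert c X" using that(3) by blast+
        then have "c \<in> Y" "c' \<in> X" using \<open>c \<noteq> c'\<close> by auto
        then have "c \<le> c' - 1" "c' \<le> c - 1" using X Y by auto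
        then show False using \<open>c \<ge> 1\<close> \<open>c' \<ge> 1\<close> by linarith
      qed
      then show ?thesis by blast
    qed
    have "card (MC t m) = (\<Sum>c\<in>{m+1-t..a*t}. card (insert c ` MC t (c - 1)))"
      unfolding MC_decomp[OF assms tm] a_def[symmetric]
    proof (rule card_UN_disjoint)
      show "finite {m + 1 - t..a * t}" by simp
      show "\<forall>i\<in>{m + 1 - t..a * t}. finite (insert i ` MC t (i - 1))" using fin by simp
      show "\<forall>i\<in>{m + 1 - t..a * t}. \<forall>j\<in>{m + 1 - t..a * t}. i \<noteq> j \<longrightarrow> insert i ` MC t (i - 1) \<inter> insert j ` MC t (j - 1) = {}"
      proof (intro ballI impI)
        fix i j assume ij: "i \<in> {m + 1 - t..a * t}" "j \<in> {m + 1 - t..a * t}" "i \<noteq> j"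
        then have "i \<ge> 1" "j \<ge> 1" using tm by auto
        then show "insert i ` MC t (i - 1) \<inter> insert j ` MC t (j - 1) = {}" using disj ij(3) by blast
      qed
    qed
    also have "\<dots> = (\<Sum>c\<in>{m+1-t..a*t}. card (MC t (c - 1)))"
      by (rule sum.cong[OF refl]) (use inj tm in \<open>auto intro!: card_image\<close>)
    also have "\<dots> = (\<Sum>c\<in>{m+1-t..a*t}. (a - 1 + (a * t - c)) choose (a * t - c))"
    proof (rule sum.cong[OF refl])
      fix c assume c: "c \<in> {m+1-t..a*t}"
      have e: "c - 1 = (a - 1) * t + (t - 1 - (a * t - c))" "t - 1 - (a * t - c) < t"
        using c mab assms by (auto simp: diff_mult_distrib)
      then have dv: "(c - 1) div t = a - 1" "(c - 1) mod t = t - 1 - (a * t - c)" by (metis divmod_eq)+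
      have "t \<le> a * t" using mab by simp
      then have "c - 1 < m" using c mab assms by (simp, linarith)
      then have "card (MC t (c - 1)) = ((c - 1) div t + t - (c - 1) mod t - 1) choose ((c - 1) div t)"
        using less.IH by blast
      also have "\<dots> = (a - 1 + (a * t - c)) choose (a - 1)"
      proof -
        have c': "m + 1 - t \<le> c" "c \<le> a * t" using c by auto
        have "a * t - c \<le> t - 1" using c' mab(1) by linarith
        then have "a - 1 + t - (t - 1 - (a * t - c)) - 1 = a - 1 + (a * t - c)" using assms by linarith
        then show ?thesis unfolding dv by simp
      qed
      also have "\<dots> = (a - 1 + (a * t - c)) choose (a * t - c)"
      proof -
        have "(a - 1 + (a * t - c)) choose (a - 1) = (a - 1 + (a * t - c)) choose (a - 1 + (a * t - c) - (a - 1))"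
          by (rule binomial_symmetric) simp
        also have "a - 1 + (a * t - c) - (a - 1) = a * t - c" by simp
        finally show ?thesis .
      qed
      finally show "card (MC t (c - 1)) = (a - 1 + (a * t - c)) choose (a * t - c)" .
    qed
    also have "\<dots> = (\<Sum>y\<in>{0..t - 1 - b}. (a - 1 + y) choose y)"
    proof (rule sum.reindex_bij_witness[where i = "\<lambda>y. a * t - y" and j = "\<lambda>c. a * t - c"])
      fix c assume "c \<in> {m+1-t..a*t}" then show "a * t - (a * t - c) = c" by simp
    next
      fix c assume c: "c \<in> {m+1-t..a*t}"
      have c': "m + 1 - t \<le> c" "c \<le> a * t" using c by auto
      have "a * t - c \<le> t - 1 - b" using c' mab(1) by linarith
      then show "a * t - c \<in> {0..t - 1 - b}" by simp
    next
      fix y assume y: "y \<in> {0..t - 1 - b}" show "a * t - (a * t - y) = y"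
      proof -
        have "t \<le> a * t" using mab by simp
        then have "y \<le> a * t" using y by (simp, linarith)
        then show ?thesis by simp
      qed
    next
      fix y assume y: "y \<in> {0..t - 1 - b}"
      have "t \<le> a * t" using mab by simp
      moreover have "y \<le> t - 1 - b" using y by simp
      ultimately have "m + 1 - t \<le> a * t - y" using mab(1,2) by linarith
      then show "a * t - y \<in> {m+1-t..a*t}" by simp
    next
      fix c assume "c \<in> {m+1-t..a*t}" then show "(a - 1 + (a * t - c)) choose (a * t - c) = (a - 1 + (a * t - c)) choose (a * t - c)" by simp
    qed
    also have "\<dots> = Suc (a - 1 + (t - 1 - b)) choose (t - 1 - b)"
      using sum_choose_lower[of "a - 1" "t - 1 - b"] by (simp add: atLeast0AtMost)
    also have "\<dots> = (a + t - b - 1) choose a"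
    proof -
      have e1: "Suc (a - 1 + (t - 1 - b)) = a + (t - 1 - b)" using mab by simp
      have e2: "a + t - b - 1 = a + (t - 1 - b)" using mab by simp
      have "(a + (t - 1 - b)) choose (t - 1 - b) = (a + (t - 1 - b)) choose (a + (t - 1 - b) - (t - 1 - b))"
        by (rule binomial_symmetric) simp
      also have "a + (t - 1 - b) - (t - 1 - b) = a" by simp
      finally show ?thesis unfolding e1 e2 .
    qed
    finally show ?thesis unfolding a_def b_def .
  qed
qed




lemma pg_simp: "path_gen t i j = (if i \<le> j \<and> j < i + t then 1 else 0)"
  by (simp add: path_gen_def)

lemma in_pp_lower:
  assumes ip: "in_path_power n t s \<alpha>" and cv: "cov t n C" and tn: "t \<le> n"
  shows "s \<le> sum \<alpha> C"
proof -
  let ?I = "{1..n-t+1}"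
  obtain c where c: "(\<Sum>i\<in>?I. c i) = s" "\<And>j. (\<Sum>i\<in>?I. c i * path_gen t i j) \<le> \<alpha> j"
    using ip unfolding in_path_power_def by blast
  have fin: "finite C" using cov_finite[OF cv] .
  have "s = (\<Sum>i\<in>?I. c i * 1)" using c(1) by simp
  also have "\<dots> \<le> (\<Sum>i\<in>?I. c i * (\<Sum>j\<in>C. path_gen t i j))"
  proof (rule sum_mono)
    fix i assume i: "i \<in> ?I"
    then have "1 \<le> i \<and> i + t \<le> n + 1" using tn by auto
    then obtain j where j: "j \<in> C" "i \<le> j" "j < i + t" using cv unfolding cov_def by blast
    have "path_gen t i j \<le> (\<Sum>j\<in>C. path_gen t i j)" by (rule member_le_sum) (use j fin in auto)
    then have "1 \<le> (\<Sum>j\<in>C. path_gen t i j)" using j by (simp add: pg_simp)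
    then show "c i * 1 \<le> c i * (\<Sum>j\<in>C. path_gen t i j)" by (rule mult_left_mono) simp
  qed
  also have "\<dots> = (\<Sum>j\<in>C. \<Sum>i\<in>?I. c i * path_gen t i j)"
    by (simp add: sum_distrib_left sum.swap[of _ C])
  also have "\<dots> \<le> sum \<alpha> C" by (rule sum_mono) (use c(2) in auto)
  finally show ?thesis .
qed

lemma sum_shift_split:
  fixes c' g :: "nat \<Rightarrow> nat"
  assumes "L \<le> p" "L \<le> m"
  shows "(\<Sum>i=L..m. (if i = L then x else if p < i then c' i else 0) * g i) = x * g L + (\<Sum>i=p+1..m. c' i * g i)"
proof -
  have "{L..m} = insert L {L+1..m}" using assms by auto
  then have "(\<Sum>i=L..m. (if i = L then x else if p < i then c' i else 0) * g i)
      = x * g L + (\<Sum>i=L+1..m. (if i = L then x else if p < i then c' i else 0) * g i)"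
    by simp
  also have "(\<Sum>i=L+1..m. (if i = L then x else if p < i then c' i else 0) * g i) = (\<Sum>i=p+1..m. c' i * g i)"
    by (rule sum.mono_neutral_cong_right) (use assms in auto)
  finally show ?thesis .
qed

lemma sum_weight_split:
  fixes \<alpha> \<alpha>' :: "nat \<Rightarrow> nat"
  assumes "finite C" "\<And>j. \<alpha> j = \<alpha>' j + (if j \<in> W then x else 0)"
  shows "sum \<alpha> C = sum \<alpha>' C + x * card (C \<inter> W)"
proof -
  have "sum \<alpha> C = sum \<alpha>' C + (\<Sum>j\<in>C. if j \<in> W then x else 0)"
    using assms(2) by (simp add: sum.distrib)
  also have "(\<Sum>j\<in>C. if j \<in> W then x else 0) = sum (\<lambda>_. x) {j\<in>C. j \<in> W}"
    using sum.inter_filter[of C "\<lambda>_. x" "\<lambda>j. j \<in> W"] assms(1) by simp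
  also have "{j\<in>C. j \<in> W} = C \<inter> W" by auto
  finally show ?thesis by simp
qed

lemma pack_or_cover:
  fixes t n :: nat
  assumes t1: "1 \<le> t" and tn: "t \<le> n"
  defines "m \<equiv> n - t + 1"
  shows "\<forall>L. Suc m - L = k \<longrightarrow> (\<forall>\<alpha> s. \<not> (\<exists>c. (\<Sum>i=L..m. c i) = s \<and> (\<forall>j. (\<Sum>i=L..m. c i * path_gen t i j) \<le> \<alpha> j))
      \<longrightarrow> (\<exists>C. C \<subseteq> {L..n} \<and> (\<forall>i. L \<le> i \<and> i \<le> m \<longrightarrow> (\<exists>j\<in>C. i \<le> j \<and> j < i + t))
              \<and> sum \<alpha> C < s \<and> card (C \<inter> {L..<L+t}) \<le> 1))"
proof (induction k rule: less_induct)
  case (less k)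
  show ?case
  proof (intro allI impI)
    fix L \<alpha> s
    assume k: "Suc m - L = k"
    assume np: "\<not> (\<exists>c. (\<Sum>i=L..m. c i) = s \<and> (\<forall>j. (\<Sum>i=L..m. c i * path_gen t i j) \<le> \<alpha> j))"
    show "\<exists>C. C \<subseteq> {L..n} \<and> (\<forall>i. L \<le> i \<and> i \<le> m \<longrightarrow> (\<exists>j\<in>C. i \<le> j \<and> j < i + t))
              \<and> sum \<alpha> C < s \<and> card (C \<inter> {L..<L+t}) \<le> 1"
    proof (cases "m < L")
      case True
      have "s \<noteq> 0"
      proof
        assume "s = 0"
        then have "(\<Sum>i=L..m. (\<lambda>_. 0::nat) i) = s \<and> (\<forall>j. (\<Sum>i=L..m. (\<lambda>_. 0::nat) i * path_gen t i j) \<le> \<alpha> j)"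
          by simp
        then have "\<exists>c. (\<Sum>i=L..m. c i) = s \<and> (\<forall>j. (\<Sum>i=L..m. c i * path_gen t i j) \<le> \<alpha> j)"
          by (intro exI[of _ "\<lambda>_. 0"])
        then show False using np by blast
      qed
      then show ?thesis using True by (intro exI[of _ "{}"]) auto
    next
      case False
      then have Lm: "L \<le> m" by simp
      define W where "W = {L..<L+t}"
      have Wfin: "finite W" and Wne: "W \<noteq> {}" using t1 by (auto simp: W_def)
      define c1 where "c1 = Min (\<alpha> ` W)"
      have "c1 \<in> \<alpha> ` W" unfolding c1_def using Wfin Wne by (intro Min_in) auto
      then obtain p where p: "p \<in> W" "\<alpha> p = c1" by auto
      have c1le: "c1 \<le> \<alpha> j" if "j \<in> W" for j
        unfolding c1_def using Wfin that by (intro Min_le) auto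
      have pL: "L \<le> p" "p < L + t" using p by (auto simp: W_def)
      have Wn: "L + t \<le> n + 1" using Lm tn by (simp add: m_def)
      have pgW: "path_gen t L j = (if j \<in> W then 1 else 0)" for j
        by (simp add: pg_simp W_def)
      show ?thesis
      proof (cases "s \<le> c1")
        case True
        let ?c = "\<lambda>i. if i = L then s else (0::nat)"
        have "(\<Sum>i=L..m. ?c i) = s" using Lm by simp
        moreover have "(\<Sum>i=L..m. ?c i * path_gen t i j) \<le> \<alpha> j" for j
        proof -
          have "(\<Sum>i=L..m. ?c i * path_gen t i j) = (\<Sum>i=L..m. if i = L then s * path_gen t L j else 0)"
            by (rule sum.cong) auto
          also have "\<dots> = s * path_gen t L j" using Lm by simp
          also have "\<dots> \<le> \<alpha> j" using True c1le[of j] by (auto simp: pgW)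
          finally show ?thesis .
        qed
        ultimately have "\<exists>c. (\<Sum>i=L..m. c i) = s \<and> (\<forall>j. (\<Sum>i=L..m. c i * path_gen t i j) \<le> \<alpha> j)"
          by (intro exI[of _ ?c]) blast
        then show ?thesis using np by blast
      next
        case False
        then have c1s: "c1 < s" by simp
        define \<alpha>' where "\<alpha>' = (\<lambda>j. if j \<in> W then \<alpha> j - c1 else \<alpha> j)"
        have aa: "\<alpha> j = \<alpha>' j + (if j \<in> W then c1 else 0)" for j
          using c1le[of j] by (auto simp: \<alpha>'_def)
        have lt: "Suc m - (p + 1) < k" using k pL Lm by linarith
        have np': "\<not> (\<exists>c. (\<Sum>i=p+1..m. c i) = s - c1 \<and> (\<forall>j. (\<Sum>i=p+1..m. c i * path_gen t i j) \<le> \<alpha>' j))"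
        proof
          assume "\<exists>c. (\<Sum>i=p+1..m. c i) = s - c1 \<and> (\<forall>j. (\<Sum>i=p+1..m. c i * path_gen t i j) \<le> \<alpha>' j)"
          then obtain c' where c': "(\<Sum>i=p+1..m. c' i) = s - c1" "\<And>j. (\<Sum>i=p+1..m. c' i * path_gen t i j) \<le> \<alpha>' j"
            by blast
          let ?c = "\<lambda>i. if i = L then c1 else if p < i then c' i else 0"
          have "(\<Sum>i=L..m. ?c i) = (\<Sum>i=L..m. ?c i * (\<lambda>_. 1) i)" by simp
          also have "\<dots> = c1 * 1 + (\<Sum>i=p+1..m. c' i * 1)"
            by (rule sum_shift_split[OF pL(1) Lm])
          also have "\<dots> = s" using c'(1) c1s by simp
          finally have s1: "(\<Sum>i=L..m. ?c i) = s" .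
          have s2: "(\<Sum>i=L..m. ?c i * path_gen t i j) \<le> \<alpha> j" for j
          proof -
            have "(\<Sum>i=L..m. ?c i * path_gen t i j) = c1 * path_gen t L j + (\<Sum>i=p+1..m. c' i * path_gen t i j)"
              by (rule sum_shift_split[OF pL(1) Lm])
            also have "\<dots> \<le> c1 * path_gen t L j + \<alpha>' j" using c'(2)[of j] by simp
            also have "\<dots> = \<alpha> j" using aa[of j] by (simp add: pgW)
            finally show ?thesis .
          qed
          have "\<exists>c. (\<Sum>i=L..m. c i) = s \<and> (\<forall>j. (\<Sum>i=L..m. c i * path_gen t i j) \<le> \<alpha> j)"
            by (rule exI[of _ ?c]) (use s1 s2 in blast)
          then show False using np by blast
        qed
        have ih: "\<exists>C. C \<subseteq> {p+1..n} \<and> (\<forall>i. p+1 \<le> i \<and> i \<le> m \<longrightarrow> (\<exists>j\<in>C. i \<le> j \<and> j < i + t))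
              \<and> sum \<alpha>' C < s - c1 \<and> card (C \<inter> {p+1..<p+1+t}) \<le> 1"
          by (rule less.IH[OF lt, rule_format, OF refl np'])
        then obtain C2 where C2: "C2 \<subseteq> {p+1..n}" "\<forall>i. p+1 \<le> i \<and> i \<le> m \<longrightarrow> (\<exists>j\<in>C2. i \<le> j \<and> j < i + t)"
          "sum \<alpha>' C2 < s - c1" "card (C2 \<inter> {p+1..<p+1+t}) \<le> 1"
          by blast
        have C2fin: "finite C2" using C2(1) finite_subset by blast
        have sa: "sum \<alpha> C2 = sum \<alpha>' C2 + c1 * card (C2 \<inter> W)"
          by (rule sum_weight_split[OF C2fin aa])
        have "C2 \<inter> W \<subseteq> C2 \<inter> {p+1..<p+1+t}" using C2(1) pL by (auto simp: W_def)
        then have "card (C2 \<inter> W) \<le> card (C2 \<inter> {p+1..<p+1+t})"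
          by (intro card_mono) (use C2fin in auto)
        then have cW: "card (C2 \<inter> W) \<le> 1" using C2(4) by linarith
        have pn: "p \<le> n" using pL Wn by linarith
        show ?thesis
        proof (cases "card (C2 \<inter> W) = 0")
          case True
          then have CW: "C2 \<inter> W = {}" using C2fin by simp
          have pnot: "p \<notin> C2" using C2(1) by auto
          let ?C = "insert p C2"
          have "sum \<alpha> ?C = \<alpha> p + sum \<alpha> C2" using pnot C2fin by simp
          also have "\<dots> < s" using sa True p(2) C2(3) c1s by simp
          finally have s1: "sum \<alpha> ?C < s" .
          have s2: "?C \<subseteq> {L..n}" using C2(1) pL pn by auto
          have s3: "\<exists>j\<in>?C. i \<le> j \<and> j < i + t" if "L \<le> i" "i \<le> m" for i
          proof (cases "i \<le> p")
            case True then show ?thesis using pL that by auto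
          next
            case False then show ?thesis using C2(2) that by auto
          qed
          have "?C \<inter> {L..<L+t} = {p}" using CW p(1) by (auto simp: W_def)
          then have s4: "card (?C \<inter> {L..<L+t}) \<le> 1" by simp
          show ?thesis using s1 s2 s3 s4 by blast
        next
          case False
          then have c1': "card (C2 \<inter> W) = 1" using cW by simp
          then obtain q where q: "C2 \<inter> W = {q}" by (rule card_1_singletonE)
          have qq: "q \<in> C2" "L \<le> q" "q < L + t" "p + 1 \<le> q" using q C2(1) by (auto simp: W_def)
          have s1: "sum \<alpha> C2 < s" using sa c1' C2(3) c1s by simp
          have s2: "C2 \<subseteq> {L..n}" using C2(1) pL by auto
          have s3: "\<exists>j\<in>C2. i \<le> j \<and> j < i + t" if "L \<le> i" "i \<le> m" for i
          proof (cases "i \<le> p")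
            case True then show ?thesis using qq that by (intro bexI[of _ q]) auto
          next
            case False then show ?thesis using C2(2) that by auto
          qed
          have s4: "card (C2 \<inter> {L..<L+t}) \<le> 1" using c1' by (simp add: W_def)
          show ?thesis using s1 s2 s3 s4 by blast
        qed
      qed
    qed
  qed
qed

lemma not_in_pp_iff:
  assumes t1: "1 \<le> t" and tn: "t \<le> n"
  shows "\<not> in_path_power n t s \<alpha> \<longleftrightarrow> (\<exists>C. cov t n C \<and> sum \<alpha> C < s)"
proof
  assume nip: "\<not> in_path_power n t s \<alpha>"
  have np: "\<not> (\<exists>c. (\<Sum>i=1..n-t+1. c i) = s \<and> (\<forall>j. (\<Sum>i=1..n-t+1. c i * path_gen t i j) \<le> \<alpha> j))"
    using nip unfolding in_path_power_def by blast
  obtain C where C: "C \<subseteq> {1..n}" "\<And>i. 1 \<le> i \<Longrightarrow> i \<le> n - t + 1 \<Longrightarrow> (\<exists>j\<in>C. i \<le> j \<and> j < i + t)"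
    "sum \<alpha> C < s"
    using pack_or_cover[OF t1 tn, rule_format, OF refl np] by blast
  have "cov t n C" unfolding cov_def
  proof (intro conjI allI impI)
    show "C \<subseteq> {1..n}" by fact
    fix i assume "1 \<le> i \<and> i + t \<le> n + 1"
    then show "\<exists>j\<in>C. i \<le> j \<and> j < i + t" using C(2)[of i] by auto
  qed
  then show "\<exists>C. cov t n C \<and> sum \<alpha> C < s" using C(3) by blast
next
  assume "\<exists>C. cov t n C \<and> sum \<alpha> C < s"
  then show "\<not> in_path_power n t s \<alpha>" using in_pp_lower tn by fastforce
qed




lemma fps_of_poly_one_minus: "fps_of_poly [:1, -1:] = (1 - fps_X :: int fps)"
  by (simp add: fps_of_poly_pCons fps_const_neg)

lemma fps_poly_trunc:
  assumes "\<And>k. K < k \<Longrightarrow> f k = 0"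
  shows "fps_of_poly (\<Sum>k\<le>K. monom (f k) k) = Abs_fps (f :: nat \<Rightarrow> int)"
proof (rule fps_ext)
  fix n
  have "fps_of_poly (\<Sum>k\<le>K. monom (f k) k) $ n = (\<Sum>k\<le>K. if k = n then f k else 0)"
    by (simp add: fps_of_poly_nth coeff_sum)
  also have "\<dots> = f n" using assms[of n] by (cases "n \<le> K") auto
  finally show "fps_of_poly (\<Sum>k\<le>K. monom (f k) k) $ n = Abs_fps f $ n" by simp
qed

lemma poly_trunc_one: "poly (\<Sum>k\<le>K. monom (f k) k) (1::int) = (\<Sum>k\<le>K. f k)"
  by (simp add: poly_sum poly_monom)

lemma hm_aux:
  fixes A B :: "int poly"
  assumes "fps_of_poly A = G * (1 - fps_X) ^ d1" "fps_of_poly B = G * (1 - fps_X) ^ d2" "d1 \<le> d2"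
  shows "poly B 1 = poly A 1 * 0 ^ (d2 - d1)"
proof -
  have "fps_of_poly B = G * (1 - fps_X) ^ d1 * (1 - fps_X) ^ (d2 - d1)"
    using assms(2,3) by (simp add: mult.assoc flip: power_add)
  also have "\<dots> = fps_of_poly (A * [:1, -1:] ^ (d2 - d1))"
    using assms(1) by (simp add: fps_of_poly_mult fps_of_poly_power fps_of_poly_one_minus)
  finally have "B = A * [:1, -1:] ^ (d2 - d1)" by (simp add: fps_of_poly_eq_iff)
  then show ?thesis by simp
qed

lemma hm_eq:
  assumes Q: "fps_of_poly Q = Abs_fps (\<lambda>k. int (h k)) * (1 - fps_X) ^ d" and nz: "poly Q 1 \<noteq> 0"
  shows "hilbert_mult h = poly Q 1"
  unfolding hilbert_mult_def
proof (rule the_equality)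
  show "\<exists>(d::nat) (Q'::int poly). fps_of_poly Q' = Abs_fps (\<lambda>k. int (h k)) * (1 - fps_X) ^ d \<and>
      poly Q' 1 \<noteq> 0 \<and> poly Q 1 = poly Q' 1"
    using Q nz by blast
next
  fix e assume "\<exists>(d'::nat) (Q'::int poly). fps_of_poly Q' = Abs_fps (\<lambda>k. int (h k)) * (1 - fps_X) ^ d' \<and>
      poly Q' 1 \<noteq> 0 \<and> e = poly Q' 1"
  then obtain d' Q' where Q': "fps_of_poly Q' = Abs_fps (\<lambda>k. int (h k)) * (1 - fps_X) ^ d'"
    "poly Q' 1 \<noteq> 0" "e = poly Q' 1" by blast
  show "e = poly Q 1"
  proof (cases "d \<le> d'")
    case True
    from hm_aux[OF Q Q'(1) True] Q'(2) have "poly Q' 1 = poly Q 1 * 0 ^ (d' - d)" by simp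
    moreover have "d' - d = 0" using Q'(2) calculation by (cases "d' - d") auto
    ultimately show ?thesis using Q'(3) by simp
  next
    case False
    from hm_aux[OF Q'(1) Q] False have "poly Q 1 = poly Q' 1 * 0 ^ (d - d')" by simp
    moreover have "d - d' = 0" using nz calculation by (cases "d - d'") auto
    ultimately show ?thesis using Q'(3) by simp
  qed
qed

lemma cov_mono: "cov t n C \<Longrightarrow> C \<subseteq> D \<Longrightarrow> D \<subseteq> {1..n} \<Longrightarrow> cov t n D"
  unfolding cov_def by blast




definition PF :: "nat \<Rightarrow> nat set set \<Rightarrow> (nat \<Rightarrow> nat) \<Rightarrow> bool" where
  "PF s F \<alpha> \<longleftrightarrow> (\<forall>C\<in>F. sum \<alpha> C < s)"

definition QP :: "nat \<Rightarrow> nat \<Rightarrow> nat set set \<Rightarrow> int poly" where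
  "QP n s F = (\<Sum>k\<le>n*s. monom (int (cnt (PF s F) (\<Union>F) k)) k)"

lemma Cov_finite: "finite {C. cov t n C}"
proof -
  have "{C. cov t n C} \<subseteq> Pow {1..n}" by (auto simp: cov_def)
  then show ?thesis by (rule finite_subset) simp
qed

lemma hilb_IE:
  assumes t1: "1 \<le> t" and tn: "t \<le> n"
  shows "int (path_hilb n t s k) = (\<Sum>F | F \<subseteq> {C. cov t n C} \<and> F \<noteq> {}. (-1)^(card F + 1) * int (cnt (PF s F) {1..n} k))"
proof -
  let ?Cov = "{C. cov t n C}"
  let ?N = "{1..n::nat}"
  define S where "S C = {\<alpha> \<in> Vs ?N. sum \<alpha> C < s \<and> sum \<alpha> ?N = k}" for C
  have eq: "{\<alpha> \<in> monomial_exps n. mdeg n \<alpha> = k \<and> \<not> in_path_power n t s \<alpha>} = \<Union> (S ` ?Cov)"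
    using not_in_pp_iff[OF t1 tn] by (auto simp: monomial_exps_def mdeg_def Vs_def S_def)
  have fin: "finite (S C)" for C unfolding S_def by (rule fin_deg) simp
  interpret Incl_Excl finite "int o card"
    by standard (auto simp add: card_Un_disjnt)
  have "int (card (\<Union> (S ` ?Cov))) = (\<Sum>B | B \<subseteq> ?Cov \<and> B \<noteq> {}. (- 1) ^ (card B + 1) * (int o card) (\<Inter> (S ` B)))"
    using restricted_indexed[of ?Cov S] fin Cov_finite by simp
  also have "\<dots> = (\<Sum>F | F \<subseteq> ?Cov \<and> F \<noteq> {}. (-1)^(card F + 1) * int (cnt (PF s F) ?N k))"
  proof (rule sum.cong[OF refl])
    fix B assume "B \<in> {B. B \<subseteq> ?Cov \<and> B \<noteq> {}}"
    then have ne: "B \<noteq> {}" by simp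
    have "\<Inter> (S ` B) = {\<alpha> \<in> Vs ?N. PF s B \<alpha> \<and> sum \<alpha> ?N = k}"
      using ne by (auto simp: S_def PF_def)
    then show "(- 1) ^ (card B + 1) * (int o card) (\<Inter> (S ` B)) = (-1)^(card B + 1) * int (cnt (PF s B) ?N k)"
      by (simp add: cnt_def)
  qed
  finally show ?thesis unfolding path_hilb_def eq .
qed

lemma GF_total:
  assumes t1: "1 \<le> t" and tn: "t \<le> n"
  shows "Abs_fps (\<lambda>k. int (path_hilb n t s k)) = (\<Sum>F | F \<subseteq> {C. cov t n C} \<and> F \<noteq> {}. fps_const ((-1)^(card F + 1)) * GF (PF s F) {1..n})"
  by (rule fps_ext) (simp add: fps_sum_nth GF_def hilb_IE[OF t1 tn])

lemma per_F:
  assumes t1: "1 \<le> t" and tn: "t \<le> n" and F: "F \<subseteq> {C. cov t n C}" "F \<noteq> {}"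
  shows "n div t \<le> card (\<Union>F)"
    and "GF (PF s F) {1..n} * (1 - fps_X) ^ (n - n div t) = fps_of_poly (QP n s F * [:1, -1:] ^ (card (\<Union>F) - n div t))"
proof -
  define U where "U = \<Union>F"
  define a where "a = n div t"
  have UN: "U \<subseteq> {1..n}"
  proof
    fix x assume "x \<in> U"
    then obtain C' where C': "C' \<in> F" "x \<in> C'" by (auto simp: U_def)
    then have "cov t n C'" using F(1) by blast
    then show "x \<in> {1..n}" using cov_mem C'(2) by fastforce
  qed
  obtain C where C: "C \<in> F" using F(2) by blast
  have cvC: "cov t n C" using F(1) C by blast
  have "C \<subseteq> U" using C by (auto simp: U_def)
  then have cvU: "cov t n U" by (rule cov_mono[OF cvC _ UN])
  have aU: "a \<le> card U" using cov_lower[OF t1 cvU] by (simp add: a_def)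
  then show "n div t \<le> card (\<Union>F)" by (simp add: a_def U_def)
  have finU: "finite U" using UN finite_subset by blast
  have cU: "card U \<le> n" using card_mono[OF _ UN] by simp
  have dep: "PF s F \<alpha> = PF s F \<beta>" if "\<forall>j\<in>U. \<alpha> j = \<beta> j" for \<alpha> \<beta>
  proof -
    have "sum \<alpha> C' = sum \<beta> C'" if "C' \<in> F" for C'
      by (rule sum.cong) (use that \<open>\<forall>j\<in>U. \<alpha> j = \<beta> j\<close> in \<open>auto simp: U_def\<close>)
    then show ?thesis by (simp add: PF_def)
  qed
  have e1: "GF (PF s F) (U \<union> ({1..n} - U)) * (1 - fps_X) ^ card ({1..n} - U) = GF (PF s F) U"
  proof (rule GF_elim)
    show "finite ({1..n} - U)" by simp
    show "finite U" by (rule finU)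
    show "({1..n} - U) \<inter> U = {}" by blast
    fix \<alpha> \<beta> :: "nat \<Rightarrow> nat" assume "\<forall>j\<in>U. \<alpha> j = \<beta> j"
    then show "PF s F \<alpha> = PF s F \<beta>" by (rule dep)
  qed
  have e2: "U \<union> ({1..n} - U) = {1..n}" using UN by auto
  have e3: "card ({1..n} - U) = n - card U" using UN finU by (simp add: card_Diff_subset)
  have van: "cnt (PF s F) U k = 0" if k: "n * s < k" for k
  proof -
    have "{\<alpha> \<in> Vs U. PF s F \<alpha> \<and> sum \<alpha> U = k} = {}"
    proof (rule ccontr)
      assume "{\<alpha> \<in> Vs U. PF s F \<alpha> \<and> sum \<alpha> U = k} \<noteq> {}"
      then obtain \<alpha> where a: "PF s F \<alpha>" "sum \<alpha> U = k" by blast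
      have "\<alpha> j \<le> s" if jU: "j \<in> U" for j
      proof -
        obtain C' where "C' \<in> F" "j \<in> C'" using jU by (auto simp: U_def)
        moreover then have "finite C'" using F(1) cov_finite by blast
        ultimately have "\<alpha> j \<le> sum \<alpha> C'" by (intro member_le_sum) auto
        also have "\<dots> < s" using a(1) \<open>C' \<in> F\<close> by (simp add: PF_def)
        finally show ?thesis by simp
      qed
      then have "sum \<alpha> U \<le> sum (\<lambda>_. s) U" by (intro sum_mono) auto
      also have "\<dots> = card U * s" by simp
      also have "\<dots> \<le> n * s" using cU by simp
      finally show False using a(2) k by simp
    qed
    then show ?thesis unfolding cnt_def by (simp only: card.empty)
  qed
  have e4: "GF (PF s F) U = fps_of_poly (QP n s F)"
    unfolding QP_def GF_def U_def[symmetric]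
    by (rule fps_poly_trunc[symmetric]) (use van in simp)
  have "GF (PF s F) {1..n} * (1 - fps_X) ^ (n - a)
      = GF (PF s F) {1..n} * (1 - fps_X) ^ (n - card U) * (1 - fps_X) ^ (card U - a)"
  proof -
    have "n - a = (n - card U) + (card U - a)" using aU cU by simp
    then have "(1 - fps_X :: int fps) ^ (n - a) = (1 - fps_X) ^ (n - card U) * (1 - fps_X) ^ (card U - a)"
      by (metis power_add)
    then show ?thesis by (simp only: mult.assoc)
  qed
  also have "\<dots> = GF (PF s F) U * (1 - fps_X) ^ (card U - a)"
  proof -
    have "GF (PF s F) {1..n} * (1 - fps_X) ^ (n - card U) = GF (PF s F) U"
      using e1 unfolding e2 e3 .
    then show ?thesis by simp
  qed
  also have "\<dots> = fps_of_poly (QP n s F * [:1, -1:] ^ (card U - a))"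
    by (simp add: e4 fps_of_poly_mult fps_of_poly_power fps_of_poly_one_minus)
  finally show "GF (PF s F) {1..n} * (1 - fps_X) ^ (n - n div t) = fps_of_poly (QP n s F * [:1, -1:] ^ (card (\<Union>F) - n div t))"
    by (simp add: a_def U_def)
qed

lemma fam_single:
  assumes t1: "1 \<le> t" and F: "F \<subseteq> {C. cov t n C}" "F \<noteq> {}" and c: "card (\<Union>F) = n div t"
  shows "F = {\<Union>F} \<and> \<Union>F \<in> MC t n"
proof -
  have UN: "\<Union>F \<subseteq> {1..n}"
  proof
    fix x assume "x \<in> \<Union>F"
    then obtain C' where C': "C' \<in> F" "x \<in> C'" by auto
    then have "cov t n C'" using F(1) by blast
    then show "x \<in> {1..n}" using cov_mem C'(2) by fastforce
  qed
  have finU: "finite (\<Union>F)" using UN finite_subset by blast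
  have "C = \<Union>F" if "C \<in> F" for C
  proof -
    have "n div t \<le> card C" using cov_lower[OF t1] F(1) that by blast
    moreover have "C \<subseteq> \<Union>F" using that by blast
    ultimately show ?thesis using card_subset_eq[OF finU] c card_mono[OF finU] by (metis le_antisym)
  qed
  then have "F = {\<Union>F}" using F(2) by blast
  moreover have "cov t n (\<Union>F)"
  proof -
    obtain C where "C \<in> F" using F(2) by blast
    then show ?thesis using F(1) UN cov_mono[of t n C "\<Union>F"] by blast
  qed
  ultimately show ?thesis using c by (simp add: MC_def)
qed

lemma poly_QP_single:
  assumes "C \<in> MC t n" "1 \<le> n div t" "1 \<le> s" "1 \<le> n"
  shows "poly (QP n s {C}) 1 = int ((s + n div t - 1) choose (s - 1))"
proof -
  define a where "a = n div t"
  have cv: "cov t n C" and cC: "card C = a" using assms(1) by (auto simp: MC_def a_def)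
  have finC: "finite C" using cov_finite[OF cv] .
  have a1: "1 \<le> a" using assms(2) by (simp add: a_def)
  have cnt1: "cnt (PF s {C}) C k = (if k < s then (k + a - 1) choose k else 0)" for k
  proof (cases "k < s")
    case True
    then have "{\<alpha> \<in> Vs C. PF s {C} \<alpha> \<and> sum \<alpha> C = k} = {\<alpha> \<in> Vs C. (\<lambda>_. True) \<alpha> \<and> sum \<alpha> C = k}"
      by (auto simp: PF_def)
    then have "cnt (PF s {C}) C k = cnt (\<lambda>_. True) C k" by (simp add: cnt_def)
    then show ?thesis using cnt_true[OF finC, of k] cC a1 True by simp
  next
    case False
    then have "{\<alpha> \<in> Vs C. PF s {C} \<alpha> \<and> sum \<alpha> C = k} = {}" by (auto simp: PF_def)
    then have "cnt (PF s {C}) C k = 0" unfolding cnt_def by (simp only: card.empty)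
    then show ?thesis using False by simp
  qed
  have "poly (QP n s {C}) 1 = (\<Sum>k\<le>n*s. int (cnt (PF s {C}) C k))"
    unfolding QP_def by (simp add: poly_trunc_one)
  also have "\<dots> = (\<Sum>k\<le>s-1. int ((a - 1 + k) choose k))"
  proof (rule sum.mono_neutral_cong_right)
    show "finite {..n*s}" by simp
    have "1 * s \<le> n * s" using assms(4) by (rule mult_le_mono1)
    then have "s \<le> n * s" by simp
    then have "s - 1 \<le> n * s" by linarith
    then show "{..s-1} \<subseteq> {..n*s}" by (simp only: atMost_subset_iff)
    show "\<forall>k\<in>{..n*s} - {..s-1}. int (cnt (PF s {C}) C k) = 0" using cnt1 by auto
    show "\<And>k. k \<in> {..s-1} \<Longrightarrow> int (cnt (PF s {C}) C k) = int ((a - 1 + k) choose k)"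
      using cnt1 assms(3) a1 by (auto simp: add.commute)
  qed
  also have "\<dots> = int (\<Sum>k\<le>s-1. (a - 1 + k) choose k)" by simp
  also have "(\<Sum>k\<le>s-1. (a - 1 + k) choose k) = Suc (a - 1 + (s - 1)) choose (s - 1)"
    by (rule sum_choose_lower)
  also have "Suc (a - 1 + (s - 1)) = s + a - 1" using a1 assms(3) by simp
  finally show ?thesis by (simp add: a_def)
qed




lemma main_mult:
  assumes t1: "1 \<le> t" and tn: "t \<le> n" and nab: "n = a * t + b" and a1: "1 \<le> a" and bt: "b < t" and s1: "1 \<le> s"
  shows "hilbert_mult (path_hilb n t s) = int (((s + a - 1) choose (s - 1)) * ((a + t - b - 1) choose a))"
proof -
  have ndiv: "n div t = a" and nmod: "n mod t = b" using nab bt by simp_all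
  have n1: "1 \<le> n" using t1 tn by simp
  let ?Fam = "{F. F \<subseteq> {C. cov t n C} \<and> F \<noteq> {}}"
  define Q where "Q = (\<Sum>F\<in>?Fam. smult ((-1)^(card F + 1)) (QP n s F * [:1,-1:]^(card (\<Union>F) - a)))"
  have finFam: "finite ?Fam"
  proof -
    have "?Fam \<subseteq> Pow {C. cov t n C}" by auto
    then show ?thesis using Cov_finite by (rule finite_subset[OF _ finite_Pow_iff[THEN iffD2]])
  qed
  have "fps_of_poly Q = (\<Sum>F\<in>?Fam. fps_const ((-1)^(card F + 1)) * (GF (PF s F) {1..n} * (1 - fps_X) ^ (n - a)))"
    unfolding Q_def fps_of_poly_sum fps_of_poly_smult
  proof (rule sum.cong[OF refl])
    fix F assume F: "F \<in> ?Fam"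
    have "GF (PF s F) {1..n} * (1 - fps_X) ^ (n - n div t) = fps_of_poly (QP n s F * [:1, -1:] ^ (card (\<Union>F) - n div t))"
      using F by (intro per_F(2)[OF t1 tn]) auto
    then show "fps_const ((- 1) ^ (card F + 1)) * fps_of_poly (QP n s F * [:1, - 1:] ^ (card (\<Union> F) - a)) =
         fps_const ((- 1) ^ (card F + 1)) * (GF (PF s F) {1..n} * (1 - fps_X) ^ (n - a))"
      by (simp add: ndiv)
  qed
  also have "\<dots> = (\<Sum>F\<in>?Fam. fps_const ((-1)^(card F + 1)) * GF (PF s F) {1..n}) * (1 - fps_X) ^ (n - a)"
    by (simp add: sum_distrib_right mult.assoc)
  also have "\<dots> = Abs_fps (\<lambda>k. int (path_hilb n t s k)) * (1 - fps_X) ^ (n - a)"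
    by (simp only: GF_total[OF t1 tn])
  finally have Qfps: "fps_of_poly Q = Abs_fps (\<lambda>k. int (path_hilb n t s k)) * (1 - fps_X) ^ (n - a)" .
  define g where "g F = (-1)^(card F + 1) * (poly (QP n s F) 1 * 0 ^ (card (\<Union>F) - a))" for F :: "nat set set"
  have "poly Q 1 = (\<Sum>F\<in>?Fam. g F)"
    by (simp add: Q_def poly_sum g_def)
  also have "\<dots> = (\<Sum>F\<in>(\<lambda>C. {C}) ` MC t n. g F)"
  proof (rule sum.mono_neutral_right[OF finFam])
    show "(\<lambda>C. {C}) ` MC t n \<subseteq> ?Fam" by (auto simp: MC_def)
    show "\<forall>F\<in>?Fam - (\<lambda>C. {C}) ` MC t n. g F = 0"
    proof
      fix F assume F: "F \<in> ?Fam - (\<lambda>C. {C}) ` MC t n"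
      then have F1: "F \<subseteq> {C. cov t n C}" "F \<noteq> {}" by auto
      have ge: "a \<le> card (\<Union>F)" using per_F(1)[OF t1 tn F1] ndiv by simp
      show "g F = 0"
      proof (cases "card (\<Union>F) = a")
        case True
        then have "F = {\<Union>F} \<and> \<Union>F \<in> MC t n" using fam_single[OF t1 F1] ndiv by simp
        then have "F \<in> (\<lambda>C. {C}) ` MC t n" by blast
        then show ?thesis using F by blast
      next
        case False
        then have "card (\<Union>F) - a \<noteq> 0" using ge by simp
        then show ?thesis by (simp add: g_def)
      qed
    qed
  qed
  also have "\<dots> = (\<Sum>C\<in>MC t n. g {C})"
    using sum.reindex[of "\<lambda>C. {C}" "MC t n" g] by (simp add: inj_on_def o_def)
  also have "\<dots> = (\<Sum>C\<in>MC t n. int ((s + a - 1) choose (s - 1)))"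
  proof (rule sum.cong[OF refl])
    fix C assume C: "C \<in> MC t n"
    have cC: "card C = a" using C ndiv by (simp add: MC_def)
    have "poly (QP n s {C}) 1 = int ((s + n div t - 1) choose (s - 1))"
      by (rule poly_QP_single[OF C]) (use ndiv a1 s1 n1 in auto)
    then show "g {C} = int ((s + a - 1) choose (s - 1))" by (simp add: g_def cC ndiv)
  qed
  also have "\<dots> = int (card (MC t n) * ((s + a - 1) choose (s - 1)))" by simp
  also have "card (MC t n) = (a + t - b - 1) choose a"
    using MC_card[OF t1, of n] ndiv nmod by simp
  finally have Qv: "poly Q 1 = int (((s + a - 1) choose (s - 1)) * ((a + t - b - 1) choose a))"
    by (simp add: mult.commute)
  have "((s + a - 1) choose (s - 1)) > 0" by simp
  moreover have "((a + t - b - 1) choose a) > 0" using bt by simp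
  ultimately have "poly Q 1 \<noteq> 0" using Qv by simp
  from hm_eq[OF Qfps this] Qv show ?thesis by simp
qed

lemma poly_part:
  fixes N a :: nat
  assumes N: "N > 0"
  shows "\<exists>p :: rat poly. degree p = a \<and> (\<forall>s::nat. 1 \<le> s \<longrightarrow> (of_nat (((s + a - 1) choose (s - 1)) * N) :: rat) = poly p (of_nat s))"
proof -
  define q :: "rat poly" where "q = (\<Prod>k<a. [:of_nat k, 1:])"
  define p where "p = smult (of_nat N / fact a) q"
  have dq: "degree q = a"
  proof -
    have "degree q = (\<Sum>k<a. degree ([:of_nat k, 1:] :: rat poly))"
      unfolding q_def by (rule degree_prod_eq_sum_degree) auto
    also have "\<dots> = a" by simp
    finally show ?thesis .
  qed
  have "degree p = a" using N dq by (simp add: p_def)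
  moreover have "(of_nat (((s + a - 1) choose (s - 1)) * N) :: rat) = poly p (of_nat s)" if s1: "1 \<le> s" for s
  proof -
    have "(s + a - 1) choose (s - 1) = (s + a - 1) choose (s + a - 1 - (s - 1))"
      by (rule binomial_symmetric) simp
    also have "s + a - 1 - (s - 1) = a" using s1 by simp
    finally have b1: "(s + a - 1) choose (s - 1) = (s + a - 1) choose a" .
    have "(of_nat ((s + a - 1) choose a) :: rat) = (of_nat (s + a - 1) gchoose a)"
      by (rule binomial_gbinomial)
    also have "\<dots> = pochhammer (of_nat (s + a - 1) - of_nat a + 1) a / fact a"
      by (rule gbinomial_pochhammer')
    also have "(of_nat (s + a - 1) :: rat) - of_nat a + 1 = of_nat s"
    proof -
      have e: "s + a - 1 + 1 = s + a" using s1 by simp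
      have "(of_nat (s + a - 1 + 1) :: rat) = of_nat (s + a)" by (simp only: e)
      then have "(of_nat (s + a - 1) :: rat) + 1 = of_nat s + of_nat a" by (simp only: of_nat_add of_nat_1)
      then show ?thesis by linarith
    qed
    finally have b2: "(of_nat ((s + a - 1) choose a) :: rat) = pochhammer (of_nat s) a / fact a" .
    have pq: "poly q (of_nat s) = pochhammer (of_nat s) a"
      unfolding q_def by (simp add: poly_prod pochhammer_prod atLeast0LessThan add.commute)
    have "(of_nat (((s + a - 1) choose (s - 1)) * N) :: rat) = of_nat ((s + a - 1) choose a) * of_nat N"
      by (simp only: b1 of_nat_mult)
    also have "\<dots> = pochhammer (of_nat s) a / fact a * of_nat N" by (simp only: b2)
    also have "\<dots> = of_nat N / fact a * poly q (of_nat s)" by (simp only: pq divide_inverse mult_ac)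
    also have "\<dots> = poly p (of_nat s)" by (simp add: p_def)
    finally show ?thesis .
  qed
  ultimately show ?thesis by blast
qed


theorem theorem3p9:
  fixes n t a b :: nat
  assumes "1 \<le> t" and "t \<le> n" and "n = a * t + b" and "1 \<le> a" and "b < t"
  shows "(\<forall>s::nat. 1 \<le> s \<longrightarrow>
            hilbert_mult (path_hilb n t s)
              = int (((s + a - 1) choose (s - 1)) * ((a + t - b - 1) choose a)))
       \<and> (\<exists>p :: rat poly. degree p = a \<and>
            (\<forall>s::nat. 1 \<le> s \<longrightarrow> of_int (hilbert_mult (path_hilb n t s)) = poly p (of_nat s)))"
proof -
  have m: "hilbert_mult (path_hilb n t s) = int (((s + a - 1) choose (s - 1)) * ((a + t - b - 1) choose a))"
    if "1 \<le> s" for s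
    using main_mult[OF assms that] .
  have "(a + t - b - 1) choose a > 0" using assms(5) by simp
  then obtain p :: "rat poly" where p: "degree p = a"
    "\<forall>s::nat. 1 \<le> s \<longrightarrow> (of_nat (((s + a - 1) choose (s - 1)) * ((a + t - b - 1) choose a)) :: rat) = poly p (of_nat s)"
    using poly_part by blast
  have "\<forall>s::nat. 1 \<le> s \<longrightarrow> of_int (hilbert_mult (path_hilb n t s)) = poly p (of_nat s)"
  proof (intro allI impI)
    fix s :: nat assume s: "1 \<le> s"
    have "(of_int (hilbert_mult (path_hilb n t s)) :: rat) = of_nat (((s + a - 1) choose (s - 1)) * ((a + t - b - 1) choose a))"
      using m[OF s] by simp
    also have "\<dots> = poly p (of_nat s)" using p(2) s by blast
    finally show "of_int (hilbert_mult (path_hilb n t s)) = poly p (of_nat s)" .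
  qed
  then show ?thesis using m p(1) by blast
qed

end
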